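(* Let $\alpha\in(0,1)\setminus\mathbb{Q}$ and let $p_s/q_s$ be its continued fraction convergents. Then the following three conditions are equivalent: (a) the sequence $\dfrac{e_n(\alpha)}{n^2\log n}$, $n\geq2$, is bounded; (b) the sequence $\dfrac{e_{q_s}(\alpha)}{q_s^2\log q_s}$ (over $s$ with $q_s\geq2$) is bounded; (c) the sequence $\dfrac{\log q_{s+1}}{q_s^2\log q_s}$ (over $s$ with $q_s\geq2$) is bounded.
   Context: Let $\Delta^2$ be the closed unit bidisk in $\mathbb{C}^2$, $\mathcal{P}_n$ the space of polynomials $P\in\mathbb{C}[z,w]$ of total degree at most $n$, $K=\{(e^z,e^{\alpha z}):\ |z|\leq1\}$, $\|P\|_A=\sup_A|P|$, $E_n(\alpha)=\sup\{\|P\|_{\Delta^2}:\ P\in\mathcal{P}_n,\ \|P\|_K\leq1\}$ and $e_n(\alpha)=\log E_n(\alpha)$. Continued fractions: $\alpha=[a_0;a_1,a_2,\dots]$ with integers $a_j\geq1$ for $j\geq1$; convergents $p_s/q_s=[a_0;a_1,\dots,a_s]$ with $q_s=a_sq_{s-1}+q_{s-2}$, $q_0=1$, $q_{-1}=0$ (and similarly $p_s=a_sp_{s-1}+p_{s-2}$, $p_0=a_0$, $p_{-1}=1$). *)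

theory Defs
  imports Complex_Main
begin

definition polys_deg :: "nat \<Rightarrow> (complex \<times> complex \<Rightarrow> complex) set" where
  "polys_deg n = {P. \<exists>c :: nat \<Rightarrow> nat \<Rightarrow> complex.
      \<forall>z w. P (z, w) = (\<Sum>i\<le>n. \<Sum>j\<le>n - i. c i j * z ^ i * w ^ j)}"

definition bidisk :: "(complex \<times> complex) set" where
  "bidisk = {(z, w). norm z \<le> 1 \<and> norm w \<le> 1}"

definition Kset :: "real \<Rightarrow> (complex \<times> complex) set" where
  "Kset \<alpha> = (\<lambda>z. (exp z, exp (complex_of_real \<alpha> * z))) ` {z. norm z \<le> 1}"

definition supnorm :: "(complex \<times> complex) set \<Rightarrow> (complex \<times> complex \<Rightarrow> complex) \<Rightarrow> real" where
  "supnorm A P = Sup ((\<lambda>x. norm (P x)) ` A)"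

definition E_n :: "real \<Rightarrow> nat \<Rightarrow> real" where
  "E_n \<alpha> n = Sup {supnorm bidisk P | P. P \<in> polys_deg n \<and> supnorm (Kset \<alpha>) P \<le> 1}"

definition e_n :: "real \<Rightarrow> nat \<Rightarrow> real" where
  "e_n \<alpha> n = ln (E_n \<alpha> n)"

fun cf_rem :: "real \<Rightarrow> nat \<Rightarrow> real" where
  "cf_rem x 0 = x"
| "cf_rem x (Suc k) = 1 / (cf_rem x k - of_int \<lfloor>cf_rem x k\<rfloor>)"

definition cf_a :: "real \<Rightarrow> nat \<Rightarrow> int" where
  "cf_a x k = \<lfloor>cf_rem x k\<rfloor>"

text \<open>Denominators of convergents: q_0 = 1, q_1 = a_1 (= a_1 q_0 + q_(-1)),
  q_(s+2) = a_(s+2) q_(s+1) + q_s.\<close>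
fun cf_q :: "real \<Rightarrow> nat \<Rightarrow> int" where
  "cf_q x 0 = 1"
| "cf_q x (Suc 0) = cf_a x 1"
| "cf_q x (Suc (Suc s)) = cf_a x (Suc (Suc s)) * cf_q x (Suc s) + cf_q x s"

end

theory Submission
  imports Defs "HOL-Analysis.Analysis"
begin


fun qq :: "real \<Rightarrow> nat \<Rightarrow> int" where
  "qq x 0 = 0"
| "qq x (Suc 0) = 1"
| "qq x (Suc (Suc k)) = cf_a x (Suc k) * qq x (Suc k) + qq x k"

fun pp :: "real \<Rightarrow> nat \<Rightarrow> int" where
  "pp x 0 = 1"
| "pp x (Suc 0) = cf_a x 0"
| "pp x (Suc (Suc k)) = cf_a x (Suc k) * pp x (Suc k) + pp x k"

lemma cf_q_qq: "cf_q x s = qq x (Suc s)"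
  by (induction x s rule: cf_q.induct) auto

lemma rem_irrat: assumes "x \<notin> \<rat>" shows "cf_rem x k \<notin> \<rat>"
proof (induction k)
  case 0 then show ?case using assms by simp
next
  case (Suc k)
  let ?r = "cf_rem x k"
  have "?r - of_int \<lfloor>?r\<rfloor> \<notin> \<rat>"
  proof
    assume "?r - of_int \<lfloor>?r\<rfloor> \<in> \<rat>"
    then have "?r - of_int \<lfloor>?r\<rfloor> + of_int \<lfloor>?r\<rfloor> \<in> \<rat>" by (intro Rats_add) auto
    then show False using Suc by simp
  qed
  then have "1 / (?r - of_int \<lfloor>?r\<rfloor>) \<notin> \<rat>"
  proof (intro notI)
    assume "1 / (?r - of_int \<lfloor>?r\<rfloor>) \<in> \<rat>"
    then have "1 / (1 / (?r - of_int \<lfloor>?r\<rfloor>)) \<in> \<rat>" using Rats_divide[OF Rats_1] by blast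
    then show False using \<open>?r - of_int \<lfloor>?r\<rfloor> \<notin> \<rat>\<close> by simp
  qed
  then show ?case by simp
qed

lemma rem_floor_strict: assumes "x \<notin> \<rat>"
  shows "of_int (cf_a x k) < cf_rem x k" "cf_rem x k < of_int (cf_a x k) + 1"
proof -
  have ni: "cf_rem x k \<noteq> of_int (cf_a x k)" using rem_irrat[OF assms, of k] by auto
  show "of_int (cf_a x k) < cf_rem x k" using ni unfolding cf_a_def
    by (metis of_int_floor_le order_le_imp_less_or_eq)
  show "cf_rem x k < of_int (cf_a x k) + 1" unfolding cf_a_def by linarith
qed

lemma rem_gt1: assumes "x \<notin> \<rat>" shows "cf_rem x (Suc k) > 1"
proof -
  have "0 < cf_rem x k - of_int (cf_a x k)" "cf_rem x k - of_int (cf_a x k) < 1"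
    using rem_floor_strict[OF assms, of k] by auto
  then show ?thesis by (simp add: cf_a_def)
qed

lemma a_ge1: assumes "x \<notin> \<rat>" shows "cf_a x (Suc k) \<ge> 1"
  using rem_gt1[OF assms, of k] unfolding cf_a_def by linarith

lemma rem_Suc: assumes "x \<notin> \<rat>"
  shows "cf_rem x (Suc k) * (cf_rem x k - of_int (cf_a x k)) = 1"
  using rem_floor_strict[OF assms, of k] by (simp add: cf_a_def)

lemma qq_pos: assumes "x \<notin> \<rat>" shows "qq x (Suc k) \<ge> 1 \<and> qq x k \<ge> 0 \<and> qq x (Suc k) \<ge> int k"
proof (induction k rule: nat_less_induct)
  case (1 k)
  show ?case
  proof (cases k)
    case 0 then show ?thesis by simp
  next
    case (Suc j)
    note kk = this
    show ?thesis
    proof (cases j)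
      case 0 then show ?thesis using kk a_ge1[OF assms, of 0] by simp
    next
      case (Suc i)
      have a: "cf_a x (Suc j) \<ge> 1" using a_ge1[OF assms] by blast
      have h1: "qq x (Suc j) \<ge> 1" "qq x (Suc j) \<ge> int j" "qq x j \<ge> 0" using 1 kk by auto
      have h2: "qq x j \<ge> 1" using 1 kk Suc by auto
      have "cf_a x (Suc j) * qq x (Suc j) \<ge> qq x (Suc j)" using a h1 by (simp add: mult_le_cancel_right1)
      moreover have "qq x (Suc k) = cf_a x (Suc j) * qq x (Suc j) + qq x j" using kk by simp
      ultimately show ?thesis using h1 h2 unfolding kk by linarith
    qed
  qed
qed

lemma qq_mono: assumes "x \<notin> \<rat>" shows "qq x (Suc k) \<le> qq x (Suc (Suc k))"
proof -
  have a: "cf_a x (Suc k) \<ge> 1" using a_ge1[OF assms] by blast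
  have h: "qq x (Suc k) \<ge> 1" "qq x k \<ge> 0" using qq_pos[OF assms] by auto
  have "cf_a x (Suc k) * qq x (Suc k) \<ge> qq x (Suc k)" using a h by (simp add: mult_le_cancel_right1)
  moreover have "qq x (Suc (Suc k)) = cf_a x (Suc k) * qq x (Suc k) + qq x k" by simp
  ultimately show ?thesis using h by linarith
qed

lemma qq_mono': assumes "x \<notin> \<rat>" "i \<le> j" shows "qq x (Suc i) \<le> qq x (Suc j)"
  using assms(2)
proof (induction j)
  case 0 then show ?case by simp
next
  case (Suc j) then show ?case using qq_mono[OF assms(1), of j] by (cases "i = Suc j") auto
qed

definition ee :: "real \<Rightarrow> nat \<Rightarrow> real" where "ee x k = of_int (qq x k) * x - of_int (pp x k)"

lemma ee_rec: "ee x (Suc (Suc k)) = of_int (cf_a x (Suc k)) * ee x (Suc k) + ee x k"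
  by (simp add: ee_def algebra_simps)

lemma ee_rem: assumes "x \<notin> \<rat>" "0 < x" "x < 1"
  shows "ee x (Suc k) * cf_rem x (Suc k) = - ee x k"
proof (induction k)
  case 0
  have "\<lfloor>x\<rfloor> = 0" using assms by (simp add: floor_eq_iff)
  then show ?case using assms by (simp add: ee_def cf_a_def)
next
  case (Suc k)
  have r: "cf_rem x (Suc (Suc k)) * (cf_rem x (Suc k) - of_int (cf_a x (Suc k))) = 1"
    using rem_Suc[OF assms(1)] by blast
  have "ee x (Suc (Suc k)) * cf_rem x (Suc (Suc k)) =
     (of_int (cf_a x (Suc k)) * ee x (Suc k) - ee x (Suc k) * cf_rem x (Suc k)) * cf_rem x (Suc (Suc k))"
    using Suc by (simp add: ee_rec)
  also have "\<dots> = - ee x (Suc k) * (cf_rem x (Suc (Suc k)) * (cf_rem x (Suc k) - of_int (cf_a x (Suc k))))"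
    by (simp add: algebra_simps)
  also have "\<dots> = - ee x (Suc k)" using r by simp
  finally show ?case .
qed

lemma ee_formula: assumes "x \<notin> \<rat>" "0 < x" "x < 1"
  shows "\<bar>ee x (Suc k)\<bar> * (of_int (qq x (Suc k)) * cf_rem x (Suc k) + of_int (qq x k)) = 1"
proof (induction k)
  case 0
  have "\<lfloor>x\<rfloor> = 0" using assms by (simp add: floor_eq_iff)
  then show ?case using assms by (simp add: ee_def cf_a_def)
next
  case (Suc k)
  have r: "cf_rem x (Suc (Suc k)) * (cf_rem x (Suc k) - of_int (cf_a x (Suc k))) = 1"
    using rem_Suc[OF assms(1)] by blast
  have e: "ee x (Suc (Suc k)) * cf_rem x (Suc (Suc k)) = - ee x (Suc k)" using ee_rem[OF assms] by blast
  have rp: "cf_rem x (Suc (Suc k)) > 0" using rem_gt1[OF assms(1)] by (smt (verit))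
  have ae: "\<bar>ee x (Suc (Suc k))\<bar> * cf_rem x (Suc (Suc k)) = \<bar>ee x (Suc k)\<bar>"
    using e rp by (metis abs_minus_cancel abs_mult abs_of_pos)
  define A where "A = \<bar>ee x (Suc (Suc k))\<bar>"
  define E where "E = \<bar>ee x (Suc k)\<bar>"
  define R2 where "R2 = cf_rem x (Suc (Suc k))"
  define R1 where "R1 = cf_rem x (Suc k)"
  define a where "a = (of_int (cf_a x (Suc k)) :: real)"
  define q2 where "q2 = (of_int (qq x (Suc (Suc k))) :: real)"
  define q1 where "q1 = (of_int (qq x (Suc k)) :: real)"
  define q0 where "q0 = (of_int (qq x k) :: real)"
  have qd: "q2 = a * q1 + q0" unfolding q2_def a_def q1_def q0_def by simp
  have r': "R2 * (R1 - a) = 1" using r unfolding R2_def R1_def a_def .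
  have ae': "A * R2 = E" using ae unfolding A_def R2_def E_def .
  have s1: "A * q1 = E * q1 * (R1 - a)"
  proof -
    have "A * q1 = A * q1 * (R2 * (R1 - a))" using r' by simp
    also have "\<dots> = (A * R2) * q1 * (R1 - a)" by (simp add: algebra_simps)
    finally show ?thesis using ae' by simp
  qed
  have "A * (q2 * R2 + q1) = (A * R2) * q2 + A * q1" by (simp add: algebra_simps)
  also have "\<dots> = E * q2 + E * q1 * (R1 - a)" using ae' s1 by simp
  also have "\<dots> = E * (q1 * R1 + q0)" using qd by (simp add: algebra_simps)
  finally have "A * (q2 * R2 + q1) = E * (q1 * R1 + q0)" .
  then show ?case using Suc unfolding A_def E_def R2_def R1_def q2_def q1_def q0_def by simp
qed

lemma det_qq_pp: "qq x (Suc k) * pp x k - pp x (Suc k) * qq x k = (-1) ^ k"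
proof (induction k)
  case 0 then show ?case by simp
next
  case (Suc k)
  have "qq x (Suc (Suc k)) * pp x (Suc k) - pp x (Suc (Suc k)) * qq x (Suc k)
      = - (qq x (Suc k) * pp x k - pp x (Suc k) * qq x k)" by (simp add: algebra_simps)
  then show ?case using Suc by simp
qed

lemma coprime_pq: "coprime (pp x (Suc k)) (qq x (Suc k))"
proof (rule coprimeI)
  fix c assume "c dvd pp x (Suc k)" "c dvd qq x (Suc k)"
  then have "c dvd qq x (Suc k) * pp x k - pp x (Suc k) * qq x k" by simp
  then have "c dvd (-1) ^ k" using det_qq_pp by metis
  moreover have "is_unit ((-1::int) ^ k)" by simp
  ultimately show "is_unit c" using dvd_unit_imp_unit by blast
qed

lemma delta_bounds: assumes "x \<notin> \<rat>" "0 < x" "x < 1"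
  shows "1 / (2 * of_int (qq x (Suc (Suc k)))) < \<bar>ee x (Suc k)\<bar>"
        "\<bar>ee x (Suc k)\<bar> < 1 / of_int (qq x (Suc (Suc k)))"
proof -
  let ?D = "of_int (qq x (Suc k)) * cf_rem x (Suc k) + of_int (qq x k) :: real"
  have f: "\<bar>ee x (Suc k)\<bar> * ?D = 1" using ee_formula[OF assms] by blast
  have q1: "of_int (qq x (Suc k)) \<ge> (1::real)" "of_int (qq x k) \<ge> (0::real)" using qq_pos[OF assms(1), of k] by auto
  have ra: "of_int (cf_a x (Suc k)) < cf_rem x (Suc k)" "cf_rem x (Suc k) < of_int (cf_a x (Suc k)) + 1"
    using rem_floor_strict[OF assms(1), of "Suc k"] by (simp_all del: cf_rem.simps)
  have qd: "of_int (qq x (Suc (Suc k))) = of_int (cf_a x (Suc k)) * of_int (qq x (Suc k)) + (of_int (qq x k)::real)" by simp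
  have mono: "of_int (qq x (Suc k)) \<le> (of_int (qq x (Suc (Suc k)))::real)" using qq_mono[OF assms(1), of k] by (simp only: of_int_le_iff)
  have m1: "of_int (qq x (Suc k)) * of_int (cf_a x (Suc k)) < of_int (qq x (Suc k)) * cf_rem x (Suc k)"
    using q1 ra by (intro mult_strict_left_mono) auto
  have m2: "of_int (qq x (Suc k)) * cf_rem x (Suc k) < of_int (qq x (Suc k)) * (of_int (cf_a x (Suc k)) + 1)"
    using q1 ra by (intro mult_strict_left_mono) auto
  have D1: "?D > of_int (qq x (Suc (Suc k)))" using m1 qd by (simp add: mult.commute)
  have D2: "?D < 2 * of_int (qq x (Suc (Suc k)))" using m2 qd mono by (simp add: algebra_simps)
  have Dp: "?D > 0" using D1 q1 mono by linarith
  have e: "\<bar>ee x (Suc k)\<bar> = 1 / ?D" using f Dp by (simp add: field_simps)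
  show "1 / (2 * of_int (qq x (Suc (Suc k)))) < \<bar>ee x (Suc k)\<bar>" unfolding e
    using D2 Dp by (intro divide_strict_left_mono) auto
  show "\<bar>ee x (Suc k)\<bar> < 1 / of_int (qq x (Suc (Suc k)))" unfolding e
    using D1 Dp q1 mono by (intro divide_strict_left_mono) auto
qed


locale cfl =
  fixes \<alpha> :: real
  assumes irr: "\<alpha> \<notin> \<rat>" and pos: "0 < \<alpha>" and lt1: "\<alpha> < 1"
begin

lemma dio:
  fixes m t :: int
  assumes m0: "m \<noteq> 0" and small: "\<bar>of_int m\<bar> * \<bar>ee \<alpha> (Suc s)\<bar> < 1/2"
  shows "1 / (2 * of_int (qq \<alpha> (Suc s))) \<le> \<bar>of_int t + of_int m * \<alpha>\<bar>
      \<or> (qq \<alpha> (Suc s) dvd m \<and> \<bar>ee \<alpha> (Suc s)\<bar> \<le> \<bar>of_int t + of_int m * \<alpha>\<bar>)"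
proof -
  define q where "q = qq \<alpha> (Suc s)"
  define p where "p = pp \<alpha> (Suc s)"
  define \<epsilon> where "\<epsilon> = ee \<alpha> (Suc s)"
  define N where "N = q * t + m * p"
  have qpos: "q \<ge> 1" using qq_pos[OF irr, of s] unfolding q_def by auto
  have eps: "\<epsilon> = of_int q * \<alpha> - of_int p" unfolding \<epsilon>_def ee_def q_def p_def by simp
  have key: "of_int q * (of_int t + of_int m * \<alpha>) = of_int N + of_int m * \<epsilon>"
    unfolding N_def eps by (simp add: algebra_simps)
  show ?thesis
  proof (cases "N = 0")
    case False
    then have "\<bar>of_int N\<bar> \<ge> (1::real)" by (metis of_int_1_le_iff of_int_abs zero_less_abs_iff int_one_le_iff_zero_less)
    moreover have "\<bar>of_int m * \<epsilon>\<bar> < 1/2" using small unfolding \<epsilon>_def by (simp add: abs_mult)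
    ultimately have "\<bar>of_int q * (of_int t + of_int m * \<alpha>)\<bar> \<ge> 1/2" unfolding key by linarith
    then have h: "of_int q * \<bar>of_int t + of_int m * \<alpha>\<bar> \<ge> 1/2" using qpos by (simp add: abs_mult)
    have "1 / (2 * of_int q) \<le> \<bar>of_int t + of_int m * \<alpha>\<bar>"
      using h qpos by (simp add: field_simps)
    then show ?thesis unfolding q_def by simp
  next
    case True
    then have "q dvd m * p" unfolding N_def by (metis add.commute add_eq_0_iff dvd_minus_iff dvd_triv_left)
    then have dv: "q dvd m" using coprime_pq[of \<alpha> s] unfolding q_def p_def
      by (metis coprime_commute coprime_dvd_mult_left_iff)
    have "\<bar>q\<bar> \<le> \<bar>m\<bar>" using dv m0 by (simp add: dvd_imp_le_int)
    then have qm: "of_int q \<le> \<bar>of_int m::real\<bar>" using qpos by linarith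
    have "of_int q * \<bar>of_int t + of_int m * \<alpha>\<bar> = \<bar>of_int m\<bar> * \<bar>\<epsilon>\<bar>"
    proof -
      have "\<bar>of_int q * (of_int t + of_int m * \<alpha>)\<bar> = \<bar>of_int m * \<epsilon>\<bar>" using key True by simp
      then show ?thesis using qpos by (simp add: abs_mult)
    qed
    also have "\<dots> \<ge> of_int q * \<bar>\<epsilon>\<bar>" using qm by (simp add: mult_right_mono)
    finally have "\<bar>\<epsilon>\<bar> \<le> \<bar>of_int t + of_int m * \<alpha>\<bar>" using qpos by simp
    then show ?thesis using dv unfolding q_def \<epsilon>_def by simp
  qed
qed

lemma card_near: "card {i::nat. i \<le> n \<and> \<bar>u - real i\<bar> < 1} \<le> 2"
proof -
  have "{i::nat. i \<le> n \<and> \<bar>u - real i\<bar> < 1} \<subseteq> {nat \<lfloor>u\<rfloor>, nat (\<lfloor>u\<rfloor> + 1)}"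
  proof
    fix i assume "i \<in> {i::nat. i \<le> n \<and> \<bar>u - real i\<bar> < 1}"
    then have h: "u - 1 < real i" "real i < u + 1" by auto
    have "\<lfloor>u\<rfloor> \<le> int i" using h(1) by linarith
    moreover have "int i \<le> \<lfloor>u\<rfloor> + 1" using h(2) by linarith
    ultimately have "int i = \<lfloor>u\<rfloor> \<or> int i = \<lfloor>u\<rfloor> + 1" by linarith
    then show "i \<in> {nat \<lfloor>u\<rfloor>, nat (\<lfloor>u\<rfloor> + 1)}" by auto
  qed
  moreover have "card {nat \<lfloor>u\<rfloor>, nat (\<lfloor>u\<rfloor> + 1)} \<le> 2" by (simp add: card_insert_if)
  ultimately show ?thesis by (meson card_mono finite.emptyI finite.insertI order_trans)
qed

lemma card_dvd: assumes "q \<ge> (1::int)"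
  shows "card {j::nat. j \<le> n \<and> q dvd (int ja - int j)} \<le> n div (nat q) + 1"
proof -
  define qn where "qn = nat q"
  have qi: "q = int qn" "qn \<ge> 1" using assms unfolding qn_def by auto
  let ?A = "{j::nat. j \<le> n \<and> q dvd (int ja - int j)}"
  have md: "j \<in> ?A \<Longrightarrow> j mod qn = ja mod qn" for j
  proof -
    assume "j \<in> ?A"
    then have "int qn dvd int ja - int j" using qi by auto
    then have "int ja mod int qn = int j mod int qn" by (simp add: mod_eq_dvd_iff)
    then show ?thesis by (metis of_nat_eq_iff of_nat_mod)
  qed
  have "inj_on (\<lambda>j. j div qn) ?A"
  proof (rule inj_onI)
    fix x y assume "x \<in> ?A" "y \<in> ?A" "x div qn = y div qn"
    then show "x = y" using md by (metis div_mult_mod_eq)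
  qed
  moreover have "(\<lambda>j. j div qn) ` ?A \<subseteq> {..n div qn}" by (auto intro: div_le_mono)
  ultimately have "card ?A \<le> card {..n div qn}" by (meson card_inj_on_le finite_atMost)
  then show ?thesis unfolding qn_def by simp
qed

end


definition lam :: "real \<Rightarrow> nat \<times> nat \<Rightarrow> real" where
  "lam x b = real (fst b) + x * real (snd b)"

definition ell :: "real \<Rightarrow> nat \<Rightarrow> nat \<times> nat \<Rightarrow> nat \<times> nat \<Rightarrow> real" where
  "ell x s a b = (if snd b = snd a then 0 else if \<bar>lam x a - lam x b\<bar> < 1 then
      ln (2 * of_int (qq x (Suc s))) + (if qq x (Suc s) dvd (int (snd a) - int (snd b)) then ln (2 * of_int (qq x (Suc (Suc s)))) else 0) else 0)"

context cfl begin

lemma lam_inj: "inj_on (lam \<alpha>) UNIV"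
proof (rule inj_onI)
  fix a b :: "nat \<times> nat" assume h: "lam \<alpha> a = lam \<alpha> b"
  show "a = b"
  proof (cases "snd a = snd b")
    case True then show ?thesis using h unfolding lam_def by (simp add: prod_eq_iff)
  next
    case False
    then have "real (snd a) - real (snd b) \<noteq> 0" by simp
    moreover have "\<alpha> * (real (snd a) - real (snd b)) = real (fst b) - real (fst a)" using h unfolding lam_def by (simp add: algebra_simps)
    ultimately have "\<alpha> = (real (fst b) - real (fst a)) / (real (snd a) - real (snd b))" by (simp add: field_simps)
    then have "\<alpha> \<in> \<rat>" by simp
    then show ?thesis using irr by simp
  qed
qed

lemma R_pos: "ln (2 * of_int (qq \<alpha> (Suc s))) > (0::real)"
proof -
  have "of_int (qq \<alpha> (Suc s)) \<ge> (1::real)" using qq_pos[OF irr, of s] by simp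
  then show ?thesis by simp
qed

lemma ell_nonneg: "ell \<alpha> s a b \<ge> 0"
proof -
  have "ln (2 * of_int (qq \<alpha> (Suc (Suc s)))) > (0::real)" using R_pos[of "Suc s"] by simp
  then show ?thesis unfolding ell_def using R_pos[of s] by auto
qed

lemma ell_bound:
  assumes n: "2 * int n < qq \<alpha> (Suc (Suc s))" and a: "a \<in> {..n} \<times> {..n}" and b: "b \<in> {..n} \<times> {..n}"
    and ab: "a \<noteq> b"
  shows "exp (- ell \<alpha> s a b) \<le> \<bar>lam \<alpha> a - lam \<alpha> b\<bar>"
proof -
  obtain ia ja ib jb where ai: "a = (ia, ja)" and bi: "b = (ib, jb)" by (cases a, cases b)
  define t where "t = int ia - int ib"
  define m where "m = int ja - int jb"
  define q where "q = qq \<alpha> (Suc s)"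
  define Q where "Q = qq \<alpha> (Suc (Suc s))"
  have d: "lam \<alpha> a - lam \<alpha> b = of_int t + of_int m * \<alpha>"
    unfolding lam_def ai bi t_def m_def by (simp add: algebra_simps)
  show ?thesis
  proof (cases "jb = ja")
    case True
    then have "ia \<noteq> ib" using ab ai bi by auto
    then have "\<bar>of_int t\<bar> \<ge> (1::real)" unfolding t_def by linarith
    then show ?thesis using d True unfolding ell_def ai bi m_def by simp
  next
    case False
    show ?thesis
    proof (cases "\<bar>lam \<alpha> a - lam \<alpha> b\<bar> < 1")
      case False2: False
      then show ?thesis unfolding ell_def using False ai bi by auto
    next
      case True
      have m0: "m \<noteq> 0" using False unfolding m_def by simp
      have mn: "\<bar>of_int m\<bar> \<le> (real n)" using a b unfolding ai bi m_def by auto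
      have Qp: "of_int Q > (0::real)" using n unfolding Q_def by linarith
      have dl: "\<bar>ee \<alpha> (Suc s)\<bar> < 1 / of_int Q" using delta_bounds(2)[OF irr pos lt1, of s] unfolding Q_def .
      have "\<bar>of_int m\<bar> * \<bar>ee \<alpha> (Suc s)\<bar> \<le> real n * \<bar>ee \<alpha> (Suc s)\<bar>" using mn by (simp add: mult_right_mono)
      also have "\<dots> \<le> real n * (1 / of_int Q)" using dl by (intro mult_left_mono) auto
      also have "\<dots> < 1/2"
      proof -
        have "real_of_int (2 * int n) < of_int Q" using n unfolding Q_def by (simp only: of_int_less_iff)
        then have "2 * real n < of_int Q" by simp
        then show ?thesis using Qp by (simp add: field_simps)
      qed
      finally have sm: "\<bar>of_int m\<bar> * \<bar>ee \<alpha> (Suc s)\<bar> < 1/2" .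
      have ellv: "ell \<alpha> s a b = ln (2 * of_int q) + (if q dvd m then ln (2 * of_int Q) else 0)"
        unfolding ell_def using False True ai bi unfolding q_def Q_def m_def by auto
      have qp: "of_int q \<ge> (1::real)" using qq_pos[OF irr, of s] unfolding q_def by simp
      have lnQ: "ln (2 * of_int Q) \<ge> (0::real)" using R_pos[of "Suc s"] unfolding Q_def by simp
      have Rp: "ln (2 * of_int q) \<ge> (0::real)" using R_pos[of s] unfolding q_def by simp
      from dio[OF m0 sm, of t] show ?thesis
      proof
        assume h: "1 / (2 * of_int (qq \<alpha> (Suc s))) \<le> \<bar>of_int t + of_int m * \<alpha>\<bar>"
        have "exp (- ell \<alpha> s a b) \<le> exp (- ln (2 * of_int q))" using ellv lnQ by auto
        also have "\<dots> = 1 / (2 * of_int q)" using qp by (simp add: exp_minus inverse_eq_divide)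
        finally show ?thesis using h d unfolding q_def by simp
      next
        assume h: "qq \<alpha> (Suc s) dvd m \<and> \<bar>ee \<alpha> (Suc s)\<bar> \<le> \<bar>of_int t + of_int m * \<alpha>\<bar>"
        then have "ell \<alpha> s a b = ln (2 * of_int q) + ln (2 * of_int Q)" using ellv unfolding q_def by simp
        then have "exp (- ell \<alpha> s a b) \<le> exp (- ln (2 * of_int Q))" using Rp by auto
        also have "\<dots> = 1 / (2 * of_int Q)" using Qp by (simp add: exp_minus inverse_eq_divide)
        also have "\<dots> \<le> \<bar>ee \<alpha> (Suc s)\<bar>" using delta_bounds(1)[OF irr pos lt1, of s] unfolding Q_def by simp
        finally show ?thesis using h d by simp
      qed
    qed
  qed
qed

lemma ell_sum:
  assumes a: "a \<in> {..n} \<times> {..n}"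
  shows "(\<Sum>b\<in>{..n} \<times> {..n}. ell \<alpha> s a b) \<le>
     2 * (real n + 1) * ln (2 * of_int (qq \<alpha> (Suc s)))
     + 2 * ln (2 * of_int (qq \<alpha> (Suc (Suc s)))) * (real (n div nat (qq \<alpha> (Suc s))) + 1)"
proof -
  obtain ia ja where ai: "a = (ia, ja)" by (cases a)
  define R :: real where "R = ln (2 * of_int (qq \<alpha> (Suc s)))"
  define T :: real where "T = ln (2 * of_int (qq \<alpha> (Suc (Suc s))))"
  define q where "q = qq \<alpha> (Suc s)"
  have Rp: "R \<ge> 0" using R_pos[of s] unfolding R_def by simp
  have Tp: "T \<ge> 0" using R_pos[of "Suc s"] unfolding T_def by simp
  define g where "g j = (if j = ja then 0 else R + (if q dvd (int ja - int j) then T else 0))" for j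
  have gp: "g j \<ge> 0" for j unfolding g_def using Rp Tp by auto
  have inner: "(\<Sum>i\<le>n. ell \<alpha> s a (i, j)) \<le> 2 * g j" for j
  proof -
    define A where "A = {i::nat. i \<le> n \<and> \<bar>(real ia + \<alpha> * real ja - \<alpha> * real j) - real i\<bar> < 1}"
    have e: "ell \<alpha> s a (i, j) = (if i \<in> A then g j else 0)" if "i \<le> n" for i
      unfolding ell_def g_def A_def ai lam_def q_def R_def T_def using that by (auto simp: algebra_simps)
    have "(\<Sum>i\<le>n. ell \<alpha> s a (i, j)) = (\<Sum>i\<le>n. if i \<in> A then g j else 0)" using e by simp
    also have "\<dots> = (\<Sum>i\<in>{..n} \<inter> A. g j)" using sum.inter_restrict[of "{..n}" "\<lambda>_. g j" A] by simp
    also have "\<dots> = real (card ({..n} \<inter> A)) * g j" by simp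
    also have "\<dots> \<le> 2 * g j"
    proof -
      have "{..n} \<inter> A = A" unfolding A_def by auto
      then have "card ({..n} \<inter> A) \<le> 2" using card_near unfolding A_def by simp
      then show ?thesis using gp[of j] by (simp add: mult_right_mono)
    qed
    finally show ?thesis .
  qed
  have "(\<Sum>b\<in>{..n} \<times> {..n}. ell \<alpha> s a b) = (\<Sum>i\<le>n. \<Sum>j\<le>n. ell \<alpha> s a (i, j))"
    by (simp add: sum.cartesian_product)
  also have "\<dots> = (\<Sum>j\<le>n. \<Sum>i\<le>n. ell \<alpha> s a (i, j))" by (rule sum.swap)
  also have "\<dots> \<le> (\<Sum>j\<le>n. 2 * g j)" by (rule sum_mono) (rule inner)
  also have "\<dots> \<le> (\<Sum>j\<le>n. 2 * R + 2 * (if q dvd (int ja - int j) then T else 0))"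
    by (rule sum_mono) (auto simp: g_def Rp Tp)
  also have "\<dots> = 2 * (real n + 1) * R + 2 * T * real (card {j. j \<le> n \<and> q dvd (int ja - int j)})"
  proof -
    have "(\<Sum>j\<le>n. (if q dvd (int ja - int j) then T else 0)) = (\<Sum>j\<in>{..n} \<inter> {j. q dvd (int ja - int j)}. T)"
      using sum.inter_restrict[of "{..n}" "\<lambda>_. T" "{j. q dvd (int ja - int j)}"] by simp
    also have "\<dots> = T * real (card {j. j \<le> n \<and> q dvd (int ja - int j)})"
      by (simp add: Int_def mult.commute conj_commute)
    finally show ?thesis by (simp add: sum.distrib sum_distrib_left[symmetric] algebra_simps)
  qed
  also have "\<dots> \<le> 2 * (real n + 1) * R + 2 * T * (real (n div nat q) + 1)"
  proof -
    have "card {j. j \<le> n \<and> q dvd (int ja - int j)} \<le> n div nat q + 1"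
      using card_dvd[of q n ja] qq_pos[OF irr, of s] unfolding q_def by auto
    then have "real (card {j. j \<le> n \<and> q dvd (int ja - int j)}) \<le> real (n div nat q) + 1" by linarith
    then show ?thesis using Tp by (simp add: mult_left_mono)
  qed
  finally show ?thesis unfolding R_def T_def q_def .
qed

end


lemma coeff_prod_linear_bound:
  fixes x :: "'b \<Rightarrow> complex"
  assumes "finite A"
  shows "norm (coeff (\<Prod>b\<in>A. [:- x b, 1:]) k) \<le> (\<Prod>b\<in>A. 1 + norm (x b))"
  using assms
proof (induction A arbitrary: k rule: finite_induct)
  case empty
  then show ?case by (cases k) auto
next
  case (insert a A)
  let ?Q = "\<Prod>b\<in>A. [:- x b, 1:]"
  have eq: "[:- x a, 1:] * ?Q = smult (- x a) ?Q + pCons 0 ?Q"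
    by (simp add: mult_pCons_left)
  have c: "coeff ([:- x a, 1:] * ?Q) k = - x a * coeff ?Q k + (case k of 0 \<Rightarrow> 0 | Suc j \<Rightarrow> coeff ?Q j)"
    unfolding eq by (simp add: coeff_pCons)
  have b1: "norm (coeff ?Q k) \<le> (\<Prod>b\<in>A. 1 + norm (x b))" using insert by blast
  have b2: "norm (case k of 0 \<Rightarrow> 0 | Suc j \<Rightarrow> coeff ?Q j) \<le> (\<Prod>b\<in>A. 1 + norm (x b))"
    using insert.IH by (cases k) (auto intro: prod_nonneg)
  have "norm (coeff ([:- x a, 1:] * ?Q) k) \<le> norm (x a) * norm (coeff ?Q k) + norm (case k of 0 \<Rightarrow> 0 | Suc j \<Rightarrow> coeff ?Q j)"
    unfolding c by (rule order_trans[OF norm_triangle_ineq]) (simp add: norm_mult)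
  also have "\<dots> \<le> norm (x a) * (\<Prod>b\<in>A. 1 + norm (x b)) + (\<Prod>b\<in>A. 1 + norm (x b))"
    using b1 b2 by (intro add_mono mult_left_mono) auto
  also have "\<dots> = (1 + norm (x a)) * (\<Prod>b\<in>A. 1 + norm (x b))" by (simp add: algebra_simps)
  finally show ?case using insert by simp
qed

lemma interp:
  fixes I :: "'b set" and X :: "'b \<Rightarrow> real" and c :: "'b \<Rightarrow> complex"
  assumes fin: "finite I" and inj: "inj_on X I" and a: "a \<in> I" and M: "card I \<le> M"
  shows "norm (c a) * (\<Prod>b\<in>I-{a}. \<bar>X a - X b\<bar>)
     \<le> (\<Sum>k<M. norm (\<Sum>b\<in>I. c b * of_real (X b) ^ k)) * (\<Prod>b\<in>I-{a}. 1 + \<bar>X b\<bar>)"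
proof -
  define L where "L = (\<Prod>b\<in>I-{a}. [:- complex_of_real (X b), 1:])"
  have degL: "degree L = card (I - {a})" unfolding L_def
    by (subst degree_prod_eq_sum_degree) auto
  have cp: "card I > 0" using fin a by (auto simp: card_gt_0_iff)
  have degM: "degree L < M" using degL M fin a cp by (simp add: card_Diff_singleton)
  have polyL: "poly L z = (\<Prod>b\<in>I-{a}. z - complex_of_real (X b))" for z
    unfolding L_def by (simp add: poly_prod)
  have sumpoly: "(\<Sum>k<M. coeff L k * z ^ k) = poly L z" for z
  proof -
    have "(\<Sum>k<M. coeff L k * z ^ k) = (\<Sum>k\<le>degree L. coeff L k * z ^ k)"
      using degM by (intro sum.mono_neutral_right) (auto simp: coeff_eq_0)
    then show ?thesis by (simp add: poly_altdef)
  qed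
  have zero: "poly L (of_real (X b)) = 0" if "b \<in> I - {a}" for b
    unfolding polyL using that fin by (auto intro!: prod_zero)
  have "(\<Sum>k<M. coeff L k * (\<Sum>b\<in>I. c b * of_real (X b) ^ k)) = (\<Sum>b\<in>I. c b * (\<Sum>k<M. coeff L k * of_real (X b) ^ k))"
  proof -
    have "(\<Sum>k<M. coeff L k * (\<Sum>b\<in>I. c b * of_real (X b) ^ k)) = (\<Sum>k<M. \<Sum>b\<in>I. c b * (coeff L k * of_real (X b) ^ k))"
      by (simp add: sum_distrib_left mult.left_commute)
    also have "\<dots> = (\<Sum>b\<in>I. \<Sum>k<M. c b * (coeff L k * of_real (X b) ^ k))" by (rule sum.swap)
    also have "\<dots> = (\<Sum>b\<in>I. c b * (\<Sum>k<M. coeff L k * of_real (X b) ^ k))" by (simp add: sum_distrib_left)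
    finally show ?thesis .
  qed
  also have "\<dots> = (\<Sum>b\<in>I. c b * poly L (of_real (X b)))" by (simp add: sumpoly)
  also have "\<dots> = c a * poly L (of_real (X a)) + (\<Sum>b\<in>I-{a}. c b * poly L (of_real (X b)))"
    using fin a by (simp add: sum.remove)
  also have "\<dots> = c a * poly L (of_real (X a))" using zero by simp
  finally have key: "c a * poly L (of_real (X a)) = (\<Sum>k<M. coeff L k * (\<Sum>b\<in>I. c b * of_real (X b) ^ k))" by simp
  have "norm (poly L (of_real (X a))) = (\<Prod>b\<in>I-{a}. \<bar>X a - X b\<bar>)"
    unfolding polyL by (simp add: prod_norm[symmetric] of_real_diff[symmetric] del: of_real_diff)
  then have "norm (c a) * (\<Prod>b\<in>I-{a}. \<bar>X a - X b\<bar>) = norm (\<Sum>k<M. coeff L k * (\<Sum>b\<in>I. c b * of_real (X b) ^ k))"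
    using key by (metis norm_mult)
  also have "\<dots> \<le> (\<Sum>k<M. norm (coeff L k) * norm (\<Sum>b\<in>I. c b * of_real (X b) ^ k))"
    by (rule order_trans[OF norm_sum]) (simp add: norm_mult)
  also have "\<dots> \<le> (\<Sum>k<M. (\<Prod>b\<in>I-{a}. 1 + \<bar>X b\<bar>) * norm (\<Sum>b\<in>I. c b * of_real (X b) ^ k))"
  proof (rule sum_mono)
    fix k
    have "norm (coeff L k) \<le> (\<Prod>b\<in>I-{a}. 1 + norm (complex_of_real (X b)))"
      unfolding L_def using fin by (intro coeff_prod_linear_bound) auto
    then show "norm (coeff L k) * norm (\<Sum>b\<in>I. c b * of_real (X b) ^ k) \<le> (\<Prod>b\<in>I-{a}. 1 + \<bar>X b\<bar>) * norm (\<Sum>b\<in>I. c b * of_real (X b) ^ k)"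
      by (intro mult_right_mono) auto
  qed
  also have "\<dots> = (\<Sum>k<M. norm (\<Sum>b\<in>I. c b * of_real (X b) ^ k)) * (\<Prod>b\<in>I-{a}. 1 + \<bar>X b\<bar>)"
    by (simp add: sum_distrib_left[symmetric] mult.commute)
  finally show ?thesis .
qed


lemma poly_bound_gen:
  fixes c :: "nat \<times> nat \<Rightarrow> complex"
  assumes fin: "finite S" and deg: "\<forall>b\<in>S. fst b + snd b \<le> d" and Rr: "Rr \<ge> 1"
    and z: "norm z \<le> Rr" and w: "norm w \<le> Rr"
  shows "norm (\<Sum>b\<in>S. c b * z ^ fst b * w ^ snd b) \<le> (\<Sum>b\<in>S. norm (c b)) * Rr ^ d"
proof -
  have "norm (\<Sum>b\<in>S. c b * z ^ fst b * w ^ snd b) \<le> (\<Sum>b\<in>S. norm (c b * z ^ fst b * w ^ snd b))"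
    by (rule norm_sum)
  also have "\<dots> \<le> (\<Sum>b\<in>S. norm (c b) * Rr ^ d)"
  proof (rule sum_mono)
    fix b assume "b \<in> S"
    have "norm (z ^ fst b * w ^ snd b) \<le> Rr ^ fst b * Rr ^ snd b"
      unfolding norm_mult norm_power using z w Rr
      by (intro mult_mono power_mono) auto
    also have "\<dots> = Rr ^ (fst b + snd b)" by (simp add: power_add)
    also have "\<dots> \<le> Rr ^ d" using deg \<open>b \<in> S\<close> Rr by (intro power_increasing) auto
    finally have "norm (z ^ fst b * w ^ snd b) \<le> Rr ^ d" .
    then show "norm (c b * z ^ fst b * w ^ snd b) \<le> norm (c b) * Rr ^ d"
      by (simp add: norm_mult mult.assoc mult_left_mono)
  qed
  also have "\<dots> = (\<Sum>b\<in>S. norm (c b)) * Rr ^ d" by (simp add: sum_distrib_right)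
  finally show ?thesis .
qed

lemma polys_square:
  assumes "P \<in> polys_deg n"
  shows "\<exists>c'. \<forall>z w. P (z, w) = (\<Sum>b\<in>{..n} \<times> {..n}. c' b * z ^ fst b * w ^ snd b)"
proof -
  obtain c where c: "\<forall>z w. P (z, w) = (\<Sum>i\<le>n. \<Sum>j\<le>n - i. c i j * z ^ i * w ^ j)"
    using assms unfolding polys_deg_def by blast
  define c' where "c' b = (if fst b + snd b \<le> n then c (fst b) (snd b) else 0)" for b
  have "(\<Sum>b\<in>{..n} \<times> {..n}. c' b * z ^ fst b * w ^ snd b) = (\<Sum>i\<le>n. \<Sum>j\<le>n - i. c i j * z ^ i * w ^ j)" for z w
  proof -
    have "(\<Sum>b\<in>{..n} \<times> {..n}. c' b * z ^ fst b * w ^ snd b) = (\<Sum>i\<le>n. \<Sum>j\<le>n. c' (i, j) * z ^ i * w ^ j)"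
      by (simp add: sum.cartesian_product split_def)
    also have "\<dots> = (\<Sum>i\<le>n. \<Sum>j\<le>n - i. c i j * z ^ i * w ^ j)"
    proof (rule sum.cong[OF refl])
      fix i assume i: "i \<in> {..n}"
      have "(\<Sum>j\<le>n. c' (i, j) * z ^ i * w ^ j) = (\<Sum>j\<le>n. if j \<in> {..n - i} then c i j * z ^ i * w ^ j else 0)"
        using i by (intro sum.cong) (auto simp: c'_def)
      also have "\<dots> = (\<Sum>j\<in>{..n} \<inter> {..n - i}. c i j * z ^ i * w ^ j)"
        using sum.inter_restrict[of "{..n}" "\<lambda>j. c i j * z ^ i * w ^ j" "{..n - i}"] by simp
      also have "{..n} \<inter> {..n - i} = {..n - i}" by auto
      finally show "(\<Sum>j\<le>n. c' (i, j) * z ^ i * w ^ j) = (\<Sum>j\<le>n - i. c i j * z ^ i * w ^ j)" by simp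
    qed
    finally show ?thesis .
  qed
  then show ?thesis using c by metis
qed

lemma supnorm_le: assumes "A \<noteq> {}" "\<And>x. x \<in> A \<Longrightarrow> norm (P x) \<le> B" shows "supnorm A P \<le> B"
  unfolding supnorm_def using assms by (intro cSup_least) auto

lemma supnorm_ge: assumes "\<And>x. x \<in> A \<Longrightarrow> norm (P x) \<le> B" "x \<in> A" shows "norm (P x) \<le> supnorm A P"
  unfolding supnorm_def using assms by (intro cSup_upper) (auto intro!: bdd_aboveI)

lemma exp_diff_ge: assumes "0 \<le> v" "v \<le> u" shows "u - v \<le> exp u - exp (v::real)"
proof -
  have "exp u - exp v = exp v * (exp (u - v) - 1)" by (simp add: algebra_simps flip: exp_add)
  moreover have "exp (u - v) - 1 \<ge> u - v" using exp_ge_add_one_self[of "u - v"] by linarith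
  moreover have "exp v \<ge> 1" using assms by simp
  moreover have "u - v \<ge> 0" using assms by simp
  ultimately have "exp v * (exp (u - v) - 1) \<ge> 1 * (u - v)" by (intro mult_mono) auto
  then show ?thesis using \<open>exp u - exp v = _\<close> by simp
qed


context cfl begin

definition Hb :: "nat \<Rightarrow> nat \<Rightarrow> real" where
  "Hb n s = real ((n+1)^2) ^ ((n+1)^2 + 2) * 4 ^ ((n+1)^2) *
     exp (2 * (real n + 1) * ln (2 * of_int (qq \<alpha> (Suc s)))
     + 2 * ln (2 * of_int (qq \<alpha> (Suc (Suc s)))) * (real (n div nat (qq \<alpha> (Suc s))) + 1))"

lemma upper_main:
  assumes n1: "n \<ge> 1" and ns: "2 * int n < qq \<alpha> (Suc (Suc s))"
    and P: "P \<in> polys_deg n" and PK: "supnorm (Kset \<alpha>) P \<le> 1"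
    and zw: "x \<in> bidisk"
  shows "norm (P x) \<le> Hb n s"
proof -
  define S where "S = {..n} \<times> {..n}"
  define M where "M = (n+1)^2"
  define Sb where "Sb = 2 * (real n + 1) * ln (2 * of_int (qq \<alpha> (Suc s)))
     + 2 * ln (2 * of_int (qq \<alpha> (Suc (Suc s)))) * (real (n div nat (qq \<alpha> (Suc s))) + 1)"
  have finS: "finite S" unfolding S_def by simp
  have cardS: "card S = M" unfolding S_def M_def by (simp add: card_cartesian_product power2_eq_square)
  have M1: "M \<ge> 1" unfolding M_def by simp
  obtain c where c: "\<forall>z w. P (z, w) = (\<Sum>b\<in>S. c b * z ^ fst b * w ^ snd b)"
    using polys_square[OF P] unfolding S_def by blast
  have degS: "\<forall>b\<in>S. fst b + snd b \<le> 2 * n" unfolding S_def by auto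
  have Kpt: "norm (\<Sum>b\<in>S. c b * exp (complex_of_real (lam \<alpha> b * t))) \<le> 1" if t: "0 \<le> t" "t \<le> 1" for t
  proof -
    define z where "z = complex_of_real t"
    have zK: "(exp z, exp (complex_of_real \<alpha> * z)) \<in> Kset \<alpha>" unfolding Kset_def z_def using t by auto
    have bndK: "norm (P y) \<le> (\<Sum>b\<in>S. norm (c b)) * exp 1 ^ (2 * n)" if "y \<in> Kset \<alpha>" for y
    proof -
      obtain u where u: "norm u \<le> 1" "y = (exp u, exp (complex_of_real \<alpha> * u))" using \<open>y \<in> Kset \<alpha>\<close> unfolding Kset_def by auto
      have e1: "norm (exp u) \<le> exp 1" using u norm_exp[of u] by (meson exp_le_cancel_iff order_trans)
      have "norm (complex_of_real \<alpha> * u) \<le> 1" using u pos lt1 by (simp add: norm_mult) (metis abs_of_pos less_eq_real_def mult_le_one norm_ge_zero)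
      then have e2: "norm (exp (complex_of_real \<alpha> * u)) \<le> exp 1" using norm_exp by (meson exp_le_cancel_iff order_trans)
      show ?thesis unfolding u(2) c[rule_format, of "exp u"]
        by (rule poly_bound_gen[OF finS degS _ e1 e2]) simp
    qed
    have "norm (P (exp z, exp (complex_of_real \<alpha> * z))) \<le> supnorm (Kset \<alpha>) P"
      by (rule supnorm_ge[OF bndK zK])
    also have "\<dots> \<le> 1" by (rule PK)
    finally have h: "norm (P (exp z, exp (complex_of_real \<alpha> * z))) \<le> 1" .
    have "P (exp z, exp (complex_of_real \<alpha> * z)) = (\<Sum>b\<in>S. c b * exp (complex_of_real (lam \<alpha> b * t)))"
    proof -
      have "exp z ^ fst b * exp (complex_of_real \<alpha> * z) ^ snd b = exp (complex_of_real (lam \<alpha> b * t))" for b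
        unfolding z_def lam_def
        by (simp add: exp_of_nat_mult[symmetric] exp_add[symmetric] algebra_simps)
      then show ?thesis unfolding c[rule_format] by (simp add: mult.assoc)
    qed
    then show ?thesis using h by simp
  qed
  define X where "X b = exp (lam \<alpha> b / real M)" for b
  have Xpow: "complex_of_real (X b) ^ k = exp (complex_of_real (lam \<alpha> b * (real k / real M)))" for b k
  proof -
    have "complex_of_real (X b) ^ k = exp (complex_of_real (lam \<alpha> b / real M)) ^ k"
      unfolding X_def by (simp only: exp_of_real)
    also have "\<dots> = exp (of_nat k * complex_of_real (lam \<alpha> b / real M))" by (simp only: exp_of_nat_mult)
    also have "\<dots> = exp (complex_of_real (lam \<alpha> b * (real k / real M)))" by (simp add: algebra_simps)
    finally show ?thesis .
  qed
  have ysum: "(\<Sum>k<M. norm (\<Sum>b\<in>S. c b * complex_of_real (X b) ^ k)) \<le> real M"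
  proof -
    have "(\<Sum>k<M. norm (\<Sum>b\<in>S. c b * complex_of_real (X b) ^ k)) \<le> (\<Sum>k<M. 1)"
    proof (rule sum_mono)
      fix k assume "k \<in> {..<M}"
      then have "0 \<le> real k / real M" "real k / real M \<le> 1" by auto
      then show "norm (\<Sum>b\<in>S. c b * complex_of_real (X b) ^ k) \<le> 1" unfolding Xpow by (rule Kpt)
    qed
    then show ?thesis by simp
  qed
  have lam_nn: "lam \<alpha> b \<ge> 0" for b unfolding lam_def using pos by simp
  have lamS: "lam \<alpha> b \<le> real M" if "b \<in> S" for b
  proof -
    have "lam \<alpha> b \<le> real n + 1 * real n" unfolding lam_def using that pos lt1 unfolding S_def
      by (intro add_mono mult_mono) auto
    also have "\<dots> \<le> real M" unfolding M_def by (simp add: power2_eq_square algebra_simps)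
    finally show ?thesis .
  qed
  have X4: "1 + \<bar>X b\<bar> \<le> 4" if "b \<in> S" for b
  proof -
    have "lam \<alpha> b / real M \<le> 1" using lamS[OF that] M1 by (simp add: field_simps)
    then have "X b \<le> exp 1" unfolding X_def by simp
    moreover have "exp (1::real) \<le> 3" using exp_le by simp
    moreover have "X b > 0" unfolding X_def by simp
    ultimately show ?thesis by simp
  qed
  have injX: "inj_on X S"
  proof (rule inj_onI)
    fix a b assume "X a = X b"
    then have "lam \<alpha> a / real M = lam \<alpha> b / real M" unfolding X_def by simp
    then have "lam \<alpha> a = lam \<alpha> b" using M1 by simp
    then show "a = b" using lam_inj by (meson inj_onD UNIV_I)
  qed
  have ca: "norm (c a) \<le> real M ^ (M + 1) * 4 ^ M * exp Sb" if a: "a \<in> S" for a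
  proof -
    have I: "norm (c a) * (\<Prod>b\<in>S-{a}. \<bar>X a - X b\<bar>)
       \<le> (\<Sum>k<M. norm (\<Sum>b\<in>S. c b * of_real (X b) ^ k)) * (\<Prod>b\<in>S-{a}. 1 + \<bar>X b\<bar>)"
      by (rule interp[OF finS injX a]) (simp add: cardS)
    have cd: "card (S - {a}) \<le> M" using cardS finS a by (simp add: card_Diff_singleton)
    have p4: "(\<Prod>b\<in>S-{a}. 1 + \<bar>X b\<bar>) \<le> 4 ^ M"
    proof -
      have "(\<Prod>b\<in>S-{a}. 1 + \<bar>X b\<bar>) \<le> (\<Prod>b\<in>S-{a}. 4)" by (rule prod_mono) (use X4 in auto)
      also have "\<dots> = 4 ^ card (S - {a})" by simp
      also have "\<dots> \<le> 4 ^ M" using cd by (intro power_increasing) auto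
      finally show ?thesis .
    qed
    have rhs: "(\<Sum>k<M. norm (\<Sum>b\<in>S. c b * of_real (X b) ^ k)) * (\<Prod>b\<in>S-{a}. 1 + \<bar>X b\<bar>) \<le> real M * 4 ^ M"
      using ysum p4 by (intro mult_mono) (auto intro: prod_nonneg)
    have ellsum: "(\<Sum>b\<in>S-{a}. ell \<alpha> s a b) \<le> Sb"
    proof -
      have "(\<Sum>b\<in>S-{a}. ell \<alpha> s a b) \<le> (\<Sum>b\<in>S. ell \<alpha> s a b)"
        using finS by (intro sum_mono2) (auto simp: ell_nonneg)
      also have "\<dots> \<le> Sb" unfolding Sb_def S_def by (rule ell_sum) (use a S_def in simp)
      finally show ?thesis .
    qed
    have lowp: "(\<Prod>b\<in>S-{a}. \<bar>X a - X b\<bar>) \<ge> exp (- Sb) / real M ^ M"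
    proof -
      have "(\<Prod>b\<in>S-{a}. exp (- ell \<alpha> s a b) / real M) \<le> (\<Prod>b\<in>S-{a}. \<bar>X a - X b\<bar>)"
      proof (rule prod_mono)
        fix b assume b: "b \<in> S - {a}"
        have e: "exp (- ell \<alpha> s a b) \<le> \<bar>lam \<alpha> a - lam \<alpha> b\<bar>"
          by (rule ell_bound[OF ns]) (use a b S_def in auto)
        have "\<bar>lam \<alpha> a - lam \<alpha> b\<bar> / real M \<le> \<bar>X a - X b\<bar>"
        proof (cases "lam \<alpha> b \<le> lam \<alpha> a")
          case True
          have "lam \<alpha> a / real M - lam \<alpha> b / real M \<le> X a - X b" unfolding X_def
            using True M1 lam_nn by (intro exp_diff_ge) (auto simp: divide_right_mono)
          then show ?thesis using True by (simp add: diff_divide_distrib)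
        next
          case False
          have "lam \<alpha> b / real M - lam \<alpha> a / real M \<le> X b - X a" unfolding X_def
            using False M1 lam_nn by (intro exp_diff_ge) (auto simp: divide_right_mono)
          then show ?thesis using False by (simp add: diff_divide_distrib)
        qed
        then show "0 \<le> exp (- ell \<alpha> s a b) / real M \<and> exp (- ell \<alpha> s a b) / real M \<le> \<bar>X a - X b\<bar>"
          using e M1 by (auto intro: order_trans[OF divide_right_mono[OF e]])
      qed
      moreover have "(\<Prod>b\<in>S-{a}. exp (- ell \<alpha> s a b) / real M) = exp (- (\<Sum>b\<in>S-{a}. ell \<alpha> s a b)) / real M ^ card (S - {a})"
        using finS by (simp add: prod_dividef exp_sum[symmetric] sum_negf)
      moreover have "exp (- Sb) / real M ^ M \<le> exp (- (\<Sum>b\<in>S-{a}. ell \<alpha> s a b)) / real M ^ card (S - {a})"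
      proof -
        have "exp (- Sb) \<le> exp (- (\<Sum>b\<in>S-{a}. ell \<alpha> s a b))" using ellsum by simp
        moreover have "real M ^ card (S - {a}) \<le> real M ^ M" using cd M1 by (intro power_increasing) auto
        ultimately show ?thesis using M1 by (intro frac_le) auto
      qed
      ultimately show ?thesis by linarith
    qed
    have pp: "exp (- Sb) / real M ^ M > 0" using M1 by simp
    have "norm (c a) * (exp (- Sb) / real M ^ M) \<le> real M * 4 ^ M"
      using I rhs lowp by (meson mult_left_mono norm_ge_zero order_trans)
    then have "norm (c a) \<le> real M * 4 ^ M / (exp (- Sb) / real M ^ M)"
      by (rule iffD2[OF pos_le_divide_eq[OF pp]])
    also have "\<dots> = real M ^ (M + 1) * 4 ^ M * exp Sb" by (simp add: exp_minus field_simps)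
    finally show ?thesis .
  qed
  obtain z w where x: "x = (z, w)" "norm z \<le> 1" "norm w \<le> 1" using zw unfolding bidisk_def by auto
  have "norm (P x) \<le> (\<Sum>b\<in>S. norm (c b)) * 1 ^ (2 * n)"
    unfolding x c[rule_format] by (rule poly_bound_gen[OF finS degS]) (use x in auto)
  also have "\<dots> \<le> (\<Sum>b\<in>S. real M ^ (M + 1) * 4 ^ M * exp Sb)" unfolding power_one mult_1_right by (rule sum_mono, rule ca)
  also have "\<dots> = real M ^ (M + 2) * 4 ^ M * exp Sb" using cardS by simp
  finally show ?thesis unfolding Hb_def M_def Sb_def .
qed

end


lemma ln2_half: "ln (2::real) \<ge> 1/2"
proof -
  have "exp (1/2::real) ^ 2 = exp 1" by (simp add: exp_of_nat_mult[symmetric])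
  also have "\<dots> \<le> 3" using exp_le by simp
  finally have "exp (1/2::real) ^ 2 \<le> 2 ^ 2" by simp
  then have "exp (1/2::real) \<le> 2" by (rule power2_le_imp_le) simp
  then show ?thesis by (subst ln_ge_iff) auto
qed

lemma asym:
  fixes N qr Qr dr B C0 :: real
  assumes n2: "N \<ge> 2" and q1: "1 \<le> qr" and q2: "qr \<le> 2 * N" and Q1: "Qr \<ge> 1"
    and d0: "dr \<ge> 0" and dq: "dr * qr \<le> N" and B: "B \<ge> 0" and C0: "C0 \<ge> 0"
    and lnQ: "ln Qr \<le> B * qr^2 * ln qr + C0"
  shows "((N+1)^2 + 2) * ln ((N+1)^2) + (N+1)^2 * ln 4 + 2 * (N + 1) * ln (2 * qr)
      + 2 * ln (2 * Qr) * (dr + 1) \<le> (31 + 8 * C0 + 24 * B) * (N^2 * ln N)"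
proof -
  define L where "L = ln N"
  have l2: "ln 2 \<le> L" unfolding L_def using n2 by simp
  have Lh: "L \<ge> 1/2" using l2 ln2_half by linarith
  have NN: "N * N \<ge> 2 * N" using n2 by (intro mult_right_mono) auto
  have N2: "N^2 = N * N" by (simp add: power2_eq_square)
  have Np: "N \<le> N^2" using NN N2 n2 by linarith
  have "(N+1)^2 + 2 = N*N + 2*N + 3" by (simp add: power2_eq_square algebra_simps)
  then have M3: "(N+1)^2 + 2 \<le> 3 * N^2" using NN N2 n2 by linarith
  have M3': "(N+1)^2 \<le> 3 * N^2" using M3 by linarith
  have lnM: "ln ((N+1)^2) \<le> 4 * L"
  proof -
    have "N + 1 \<le> N^2" using NN N2 n2 by linarith
    then have "(N+1)^2 \<le> (N^2)^2" using n2 by (intro power_mono) auto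
    then have "ln ((N+1)^2) \<le> ln ((N^2)^2)" using n2 by (subst ln_le_cancel_iff) auto
    also have "\<dots> = ln (N^4)" by (simp flip: power_mult)
    also have "\<dots> = 4 * L" unfolding L_def using n2 ln_realpow[of N 4] by simp
    finally show ?thesis .
  qed
  have lnMp: "ln ((N+1)^2) \<ge> 0" using n2 by simp
  have t1: "((N+1)^2 + 2) * ln ((N+1)^2) \<le> (3 * N^2) * (4 * L)"
    using M3 lnM lnMp by (intro mult_mono) auto
  have t2: "(N+1)^2 * ln 4 \<le> (3 * N^2) * (2 * L)"
  proof -
    have "ln (4::real) = 2 * ln 2" using ln_realpow[of 2 2] by simp
    then have "ln (4::real) \<le> 2 * L" using l2 by simp
    then show ?thesis using M3' by (intro mult_mono) auto
  qed
  have t3: "2 * (N + 1) * ln (2 * qr) \<le> (3 * N) * (3 * L)"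
  proof -
    have "2 * qr \<le> N^3"
    proof -
      have "N * N \<ge> 4" using NN n2 by linarith
      then have "4 * N \<le> N * N * N" using n2 by (intro mult_right_mono) auto
      then show ?thesis using q2 by (simp add: power3_eq_cube)
    qed
    then have "ln (2 * qr) \<le> ln (N^3)" using q1 n2 by (subst ln_le_cancel_iff) auto
    also have "\<dots> = 3 * L" unfolding L_def using n2 by (simp add: ln_realpow)
    finally have f2: "ln (2 * qr) \<le> 3 * L" .
    have f4: "ln (2 * qr) \<ge> 0" using q1 by simp
    have f1: "2 * (N + 1) \<le> 3 * N" using n2 by simp
    have f3: "0 \<le> 3 * N" using n2 by simp
    show ?thesis by (rule mult_mono[OF f1 f2 f3 f4])
  qed
  have t3': "(3 * N) * (3 * L) \<le> 9 * (N^2 * L)" using Np Lh by (simp add: mult_right_mono)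
  have "dr * 1 \<le> dr * qr" using q1 d0 by (intro mult_left_mono) auto
  then have dN: "dr \<le> N" using dq by linarith
  have d1: "dr + 1 \<le> 2 * N" using dN n2 by linarith
  have lnq: "ln qr \<le> 2 * L"
  proof -
    have "qr \<le> N^2" using q2 NN N2 by linarith
    then have "ln qr \<le> ln (N^2)" using q1 n2 by (subst ln_le_cancel_iff) auto
    also have "\<dots> = 2 * L" unfolding L_def using n2 by (simp add: ln_realpow)
    finally show ?thesis .
  qed
  have lnq0: "ln qr \<ge> 0" using q1 by simp
  have qq6: "qr^2 * (dr + 1) \<le> 6 * N^2"
  proof -
    have "qr^2 * (dr + 1) = qr * (dr * qr) + qr^2" by (simp add: power2_eq_square algebra_simps)
    also have "\<dots> \<le> (2 * N) * N + (2 * N)^2" using q1 q2 dq d0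
      by (intro add_mono mult_mono power_mono) auto
    also have "\<dots> = 6 * N^2" by (simp add: power2_eq_square)
    finally show ?thesis .
  qed
  have t4: "2 * ln (2 * Qr) * (dr + 1) \<le> 2 * ln 2 * (dr + 1) + 2 * C0 * (dr + 1) + 2 * B * (qr^2 * (dr + 1)) * ln qr"
  proof -
    have "ln (2 * Qr) = ln 2 + ln Qr" using Q1 by (simp add: ln_mult)
    then have "2 * ln (2 * Qr) * (dr + 1) = 2 * ln 2 * (dr + 1) + 2 * ln Qr * (dr + 1)" by (simp add: algebra_simps)
    also have "2 * ln Qr * (dr + 1) \<le> 2 * (B * qr^2 * ln qr + C0) * (dr + 1)"
      using lnQ d0 by (intro mult_right_mono) auto
    finally show ?thesis by (simp add: algebra_simps)
  qed
  have t5: "2 * ln 2 * (dr + 1) \<le> 4 * (N^2 * L)"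
  proof -
    have "2 * ln 2 * (dr + 1) \<le> 2 * L * (2 * N)" using l2 d1 d0 Lh by (intro mult_mono) auto
    also have "\<dots> \<le> 4 * (N^2 * L)" using Np Lh by (simp add: mult_right_mono)
    finally show ?thesis .
  qed
  have t6: "2 * C0 * (dr + 1) \<le> 8 * C0 * (N^2 * L)"
  proof -
    have "2 * C0 * (dr + 1) \<le> 2 * C0 * (2 * N)" using d1 C0 by (intro mult_left_mono) auto
    also have "\<dots> \<le> 2 * C0 * (2 * (N^2 * (2 * L)))"
    proof -
      have "N * 1 \<le> N^2 * (2 * L)" using Np Lh n2 by (intro mult_mono) auto
      then show ?thesis using C0 by (intro mult_left_mono) auto
    qed
    finally show ?thesis by (simp add: algebra_simps)
  qed
  have t7: "2 * B * (qr^2 * (dr + 1)) * ln qr \<le> 24 * B * (N^2 * L)"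
  proof -
    have "2 * B * (qr^2 * (dr + 1)) * ln qr \<le> 2 * B * (6 * N^2) * (2 * L)"
    proof -
      have a: "2 * B * (qr^2 * (dr + 1)) \<le> 2 * B * (6 * N^2)" by (rule mult_left_mono[OF qq6]) (use B in simp)
      have b: "0 \<le> 2 * B * (6 * N^2)" using B by simp
      show ?thesis by (rule mult_mono[OF a lnq b lnq0])
    qed
    then show ?thesis by (simp add: algebra_simps)
  qed
  have "((N+1)^2 + 2) * ln ((N+1)^2) + (N+1)^2 * ln 4 + 2 * (N + 1) * ln (2 * qr)
      + 2 * ln (2 * Qr) * (dr + 1) \<le> 12 * (N^2 * L) + 6 * (N^2 * L) + 9 * (N^2 * L)
      + 4 * (N^2 * L) + 8 * C0 * (N^2 * L) + 24 * B * (N^2 * L)"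
    using t1 t2 t3 t3' t4 t5 t6 t7 by (simp add: algebra_simps)
  also have "\<dots> = (31 + 8 * C0 + 24 * B) * (N^2 * ln N)" unfolding L_def by (simp add: algebra_simps)
  finally show ?thesis .
qed


lemma delta_sum:
  assumes "i0 + j0 \<le> n"
  shows "(\<Sum>i\<le>n. \<Sum>j\<le>n - i. (if i = i0 \<and> j = j0 then (1::complex) else 0) * z ^ i * w ^ j) = z ^ i0 * w ^ j0"
proof -
  have "(\<Sum>j\<le>n - i. (if i = i0 \<and> j = j0 then (1::complex) else 0) * z ^ i * w ^ j)
      = (if i = i0 then z ^ i0 * w ^ j0 else 0)" if "i \<le> n" for i
  proof (cases "i = i0")
    case True
    have "(\<Sum>j\<le>n - i. (if i = i0 \<and> j = j0 then (1::complex) else 0) * z ^ i * w ^ j)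
        = (\<Sum>j\<le>n - i. if j = j0 then z ^ i0 * w ^ j0 else 0)" using True by (intro sum.cong) auto
    also have "\<dots> = z ^ i0 * w ^ j0" using True assms by (simp add: sum.delta)
    finally show ?thesis using True by simp
  qed simp
  then have "(\<Sum>i\<le>n. \<Sum>j\<le>n - i. (if i = i0 \<and> j = j0 then (1::complex) else 0) * z ^ i * w ^ j)
     = (\<Sum>i\<le>n. if i = i0 then z ^ i0 * w ^ j0 else 0)" by (intro sum.cong) auto
  also have "\<dots> = z ^ i0 * w ^ j0" using assms by (simp add: sum.delta)
  finally show ?thesis .
qed

lemma one_poly: "(\<lambda>_. 1) \<in> polys_deg n"
  unfolding polys_deg_def
  by (rule CollectI, rule exI[of _ "\<lambda>i j. if i = 0 \<and> j = 0 then 1 else 0"]) (simp add: delta_sum[of 0 0 n, simplified])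

lemma bidisk_00: "(0, 0) \<in> bidisk" unfolding bidisk_def by simp
lemma bidisk_01: "(0, 1) \<in> bidisk" unfolding bidisk_def by simp
lemma Kset_ne: "Kset a \<noteq> {}"
proof -
  have "(0::complex) \<in> {z. norm z \<le> 1}" by simp
  then show ?thesis unfolding Kset_def by blast
qed

context cfl begin

lemma exists_s: "\<exists>s. 2 * int n < qq \<alpha> (Suc (Suc s))"
proof -
  have "qq \<alpha> (Suc (Suc (2 * n))) \<ge> int (Suc (2 * n))" using qq_pos[OF irr, of "Suc (2*n)"] by blast
  then show ?thesis by (intro exI[of _ "2 * n"]) simp
qed

lemma E_upper: assumes "n \<ge> 1" "2 * int n < qq \<alpha> (Suc (Suc s))" shows "E_n \<alpha> n \<le> Hb n s"
  unfolding E_n_def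
proof (rule cSup_least)
  have "supnorm (Kset \<alpha>) (\<lambda>_. 1) \<le> 1" by (rule supnorm_le[OF Kset_ne]) simp
  then show "{supnorm bidisk P |P. P \<in> polys_deg n \<and> supnorm (Kset \<alpha>) P \<le> 1} \<noteq> {}"
    using one_poly by blast
next
  fix v assume "v \<in> {supnorm bidisk P |P. P \<in> polys_deg n \<and> supnorm (Kset \<alpha>) P \<le> 1}"
  then obtain P where P: "v = supnorm bidisk P" "P \<in> polys_deg n" "supnorm (Kset \<alpha>) P \<le> 1" by blast
  show "v \<le> Hb n s" unfolding P(1)
    by (rule supnorm_le) (use bidisk_00 upper_main[OF assms P(2) P(3)] in auto)
qed

lemma E_ge: assumes "n \<ge> 1" "P \<in> polys_deg n" "supnorm (Kset \<alpha>) P \<le> 1" "x \<in> bidisk"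
  shows "norm (P x) \<le> E_n \<alpha> n"
proof -
  obtain s where s: "2 * int n < qq \<alpha> (Suc (Suc s))" using exists_s by blast
  have "norm (P x) \<le> supnorm bidisk P"
    by (rule supnorm_ge[OF _ assms(4)]) (rule upper_main[OF assms(1) s assms(2) assms(3)])
  also have "\<dots> \<le> E_n \<alpha> n" unfolding E_n_def
  proof (rule cSup_upper)
    show "supnorm bidisk P \<in> {supnorm bidisk P |P. P \<in> polys_deg n \<and> supnorm (Kset \<alpha>) P \<le> 1}"
      using assms by blast
    show "bdd_above {supnorm bidisk P |P. P \<in> polys_deg n \<and> supnorm (Kset \<alpha>) P \<le> 1}"
    proof (rule bdd_aboveI)
      fix v assume "v \<in> {supnorm bidisk P |P. P \<in> polys_deg n \<and> supnorm (Kset \<alpha>) P \<le> 1}"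
      then obtain Q where Q: "v = supnorm bidisk Q" "Q \<in> polys_deg n" "supnorm (Kset \<alpha>) Q \<le> 1" by blast
      show "v \<le> Hb n s" unfolding Q(1)
        by (rule supnorm_le) (use bidisk_00 upper_main[OF assms(1) s Q(2) Q(3)] in auto)
    qed
  qed
  finally show ?thesis .
qed

lemma E_ge1: assumes "n \<ge> 1" shows "E_n \<alpha> n \<ge> 1"
proof -
  have "supnorm (Kset \<alpha>) (\<lambda>_. 1) \<le> 1" by (rule supnorm_le[OF Kset_ne]) simp
  from E_ge[OF assms one_poly this bidisk_00] show ?thesis by simp
qed

lemma e_nonneg: assumes "n \<ge> 1" shows "e_n \<alpha> n \<ge> 0"
  unfolding e_n_def using E_ge1[OF assms] by simp

lemma e_upper: assumes "n \<ge> 1" "2 * int n < qq \<alpha> (Suc (Suc s))"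
  shows "e_n \<alpha> n \<le> ((real n+1)^2 + 2) * ln ((real n+1)^2) + (real n+1)^2 * ln 4
     + 2 * (real n + 1) * ln (2 * of_int (qq \<alpha> (Suc s)))
     + 2 * ln (2 * of_int (qq \<alpha> (Suc (Suc s)))) * (real (n div nat (qq \<alpha> (Suc s))) + 1)"
proof -
  have "e_n \<alpha> n \<le> ln (Hb n s)" unfolding e_n_def
    using E_upper[OF assms] E_ge1[OF assms(1)] by (subst ln_le_cancel_iff) auto
  also have "ln (Hb n s) = ((real n+1)^2 + 2) * ln ((real n+1)^2) + (real n+1)^2 * ln 4
     + (2 * (real n + 1) * ln (2 * of_int (qq \<alpha> (Suc s)))
     + 2 * ln (2 * of_int (qq \<alpha> (Suc (Suc s)))) * (real (n div nat (qq \<alpha> (Suc s))) + 1))"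
    unfolding Hb_def by (simp add: ln_mult ln_realpow algebra_simps)
  finally show ?thesis by simp
qed

lemma pp_pos: "pp \<alpha> (Suc (Suc k)) \<ge> 1 \<and> pp \<alpha> (Suc k) \<ge> 0"
proof (induction k)
  case 0
  have "cf_a \<alpha> 0 = 0" unfolding cf_a_def using pos lt1 by (simp add: floor_eq_iff)
  then show ?case by simp
next
  case (Suc k)
  have a: "cf_a \<alpha> (Suc (Suc k)) \<ge> 1" using a_ge1[OF irr] by blast
  have "1 * 1 \<le> cf_a \<alpha> (Suc (Suc k)) * pp \<alpha> (Suc (Suc k))"
    using a Suc by (intro mult_mono) (auto simp del: pp.simps)
  then have "cf_a \<alpha> (Suc (Suc k)) * pp \<alpha> (Suc (Suc k)) \<ge> 1" by simp
  moreover have "pp \<alpha> (Suc (Suc (Suc k))) = cf_a \<alpha> (Suc (Suc k)) * pp \<alpha> (Suc (Suc k)) + pp \<alpha> (Suc k)" by simp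
  ultimately show ?case using Suc by linarith
qed

lemma e_lower: assumes s1: "s \<ge> 1"
  shows "ln (of_int (qq \<alpha> (Suc (Suc s)))) - of_int (qq \<alpha> (Suc s)) - 1 \<le> e_n \<alpha> (nat (qq \<alpha> (Suc s)))"
proof -
  define q where "q = qq \<alpha> (Suc s)"
  define Q where "Q = qq \<alpha> (Suc (Suc s))"
  define p where "p = pp \<alpha> (Suc s)"
  define \<epsilon> where "\<epsilon> = ee \<alpha> (Suc s)"
  have q1: "q \<ge> 1" using qq_pos[OF irr, of s] unfolding q_def by auto
  have Qq: "q \<le> Q" using qq_mono[OF irr, of s] unfolding q_def Q_def by simp
  have Q1: "of_int Q \<ge> (1::real)" using q1 Qq by simp
  have p1: "p \<ge> 1" using pp_pos[of "s - 1"] s1 unfolding p_def by (simp add: Suc_diff_1 del: pp.simps)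
  have eps: "\<epsilon> = of_int q * \<alpha> - of_int p" unfolding \<epsilon>_def ee_def q_def p_def by simp
  have el: "\<bar>\<epsilon>\<bar> < 1 / of_int Q" using delta_bounds(2)[OF irr pos lt1, of s] unfolding \<epsilon>_def Q_def .
  have "1 / of_int Q \<le> (1::real)" using Q1 by simp
  then have el1: "\<bar>\<epsilon>\<bar> \<le> 1" using el by linarith
  have pq: "p \<le> q"
  proof -
    have "of_int q * \<alpha> < of_int q" using q1 lt1 by simp
    then have "of_int p < of_int q + (1::real)" using eps el1 by linarith
    then show ?thesis by linarith
  qed
  define qn where "qn = nat q"
  define pn where "pn = nat p"
  have qn: "real qn = of_int q" "int qn = q" using q1 unfolding qn_def by auto
  have pn: "real pn = of_int p" "pn \<ge> 1" "pn \<le> qn" using p1 pq unfolding pn_def qn_def by auto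
  define \<kappa> :: real where "\<kappa> = of_int Q / exp (of_int q + 1)"
  have kp: "\<kappa> > 0" unfolding \<kappa>_def using Q1 by simp
  define P0 where "P0 x = complex_of_real \<kappa> * (snd x ^ qn - fst x ^ pn)" for x :: "complex \<times> complex"
  have P0poly: "P0 \<in> polys_deg qn"
    unfolding polys_deg_def
  proof (rule CollectI, rule exI[of _ "\<lambda>i j. complex_of_real \<kappa> * ((if i = 0 \<and> j = qn then 1 else 0) - (if i = pn \<and> j = 0 then 1 else 0))"], intro allI)
    fix z w :: complex
    have "(\<Sum>i\<le>qn. \<Sum>j\<le>qn - i. complex_of_real \<kappa> * ((if i = 0 \<and> j = qn then 1 else 0) - (if i = pn \<and> j = 0 then 1 else 0)) * z ^ i * w ^ j)
      = complex_of_real \<kappa> * ((\<Sum>i\<le>qn. \<Sum>j\<le>qn - i. (if i = 0 \<and> j = qn then 1 else 0) * z ^ i * w ^ j)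
          - (\<Sum>i\<le>qn. \<Sum>j\<le>qn - i. (if i = pn \<and> j = 0 then 1 else 0) * z ^ i * w ^ j))"
      by (simp add: sum_distrib_left sum_subtractf algebra_simps)
    also have "\<dots> = complex_of_real \<kappa> * (w ^ qn - z ^ pn)"
      using delta_sum[of 0 qn qn z w] delta_sum[of pn 0 qn z w] pn by simp
    finally show "P0 (z, w) = (\<Sum>i\<le>qn. \<Sum>j\<le>qn - i. complex_of_real \<kappa> * ((if i = 0 \<and> j = qn then 1 else 0) - (if i = pn \<and> j = 0 then 1 else 0)) * z ^ i * w ^ j)"
      unfolding P0_def by simp
  qed
  have P0K: "supnorm (Kset \<alpha>) P0 \<le> 1"
  proof (rule supnorm_le[OF Kset_ne])
    fix y assume "y \<in> Kset \<alpha>"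
    then obtain u where u: "norm u \<le> 1" "y = (exp u, exp (complex_of_real \<alpha> * u))" unfolding Kset_def by auto
    define v where "v = complex_of_real \<epsilon> * u"
    have diff: "exp (complex_of_real \<alpha> * u) ^ qn - exp u ^ pn = exp (of_nat pn * u) * (exp v - 1)"
    proof -
      have "exp (complex_of_real \<alpha> * u) ^ qn = exp (of_nat qn * (complex_of_real \<alpha> * u))" by (simp only: exp_of_nat_mult)
      also have "of_nat qn * (complex_of_real \<alpha> * u) = of_nat pn * u + v"
      proof -
        have r: "real qn * \<alpha> = real pn + \<epsilon>" using eps qn pn by simp
        have "complex_of_real (real qn * \<alpha>) = complex_of_real (real pn + \<epsilon>)" using r by (rule arg_cong)
        then have c: "of_nat qn * complex_of_real \<alpha> = of_nat pn + complex_of_real \<epsilon>" by simp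
        have "of_nat qn * (complex_of_real \<alpha> * u) = (of_nat qn * complex_of_real \<alpha>) * u" by (simp only: mult.assoc)
        also have "\<dots> = (of_nat pn + complex_of_real \<epsilon>) * u" using c by simp
        also have "\<dots> = of_nat pn * u + v" unfolding v_def by (simp only: distrib_right)
        finally show ?thesis .
      qed
      finally have "exp (complex_of_real \<alpha> * u) ^ qn = exp (of_nat pn * u) * exp v" by (simp add: exp_add)
      moreover have "exp u ^ pn = exp (of_nat pn * u)" by (simp only: exp_of_nat_mult)
      ultimately show ?thesis by (simp add: algebra_simps)
    qed
    have nv: "norm v \<le> \<bar>\<epsilon>\<bar>" unfolding v_def using u by (simp add: norm_mult mult_left_le)
    have b1: "norm (exp (of_nat pn * u)) \<le> exp (of_int q)"
    proof -
      have "norm (of_nat pn * u) \<le> real pn" using u by (simp add: norm_mult mult_left_le)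
      also have "\<dots> \<le> of_int q" using pn qn by simp
      finally show ?thesis using norm_exp[of "of_nat pn * u"] by (meson exp_le_cancel_iff order_trans)
    qed
    have b2: "norm (exp v - 1) \<le> exp 1 * \<bar>\<epsilon>\<bar>"
    proof -
      have "norm (exp v - 1) \<le> exp (norm v) * norm v ^ Suc 0 / fact 0"
        using Taylor_exp_field[of v 0] by simp
      also have "\<dots> \<le> exp 1 * \<bar>\<epsilon>\<bar>" using nv el1 by (simp add: mult_mono)
      finally show ?thesis .
    qed
    have "norm (P0 y) = \<kappa> * norm (exp (of_nat pn * u) * (exp v - 1))"
      unfolding P0_def u(2) using diff kp by (simp add: norm_mult)
    also have "\<dots> \<le> \<kappa> * (exp (of_int q) * (exp 1 * (1 / of_int Q)))"
    proof -
      have b3: "norm (exp v - 1) \<le> exp 1 * (1 / of_int Q)"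
        using b2 el by (meson less_eq_real_def mult_left_mono exp_ge_zero order_trans)
      show ?thesis unfolding norm_mult
        by (rule mult_left_mono[OF mult_mono[OF b1 b3]]) (use kp in auto)
    qed
    also have "\<dots> = 1" unfolding \<kappa>_def using Q1 by (simp add: exp_add field_simps)
    finally show "norm (P0 y) \<le> 1" .
  qed
  have "norm (P0 (0, 1)) \<le> E_n \<alpha> qn" using E_ge[OF _ P0poly P0K bidisk_01] pn by simp
  moreover have "norm (P0 (0, 1)) = \<kappa>"
  proof -
    have "P0 (0, 1) = complex_of_real \<kappa>" unfolding P0_def using pn(2) by (simp add: power_0_left)
    then show ?thesis using kp by simp
  qed
  ultimately have "\<kappa> \<le> E_n \<alpha> qn" by simp
  then have "ln \<kappa> \<le> e_n \<alpha> qn" unfolding e_n_def using kp by simp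
  moreover have "ln \<kappa> = ln (of_int Q) - of_int q - 1" unfolding \<kappa>_def using Q1 by (simp add: ln_div)
  ultimately show ?thesis unfolding qn_def q_def Q_def by simp
qed

end


lemma ln_frac_bound:
  fixes q :: real assumes "q \<ge> 2"
  shows "q + 1 \<le> 2 * (q^2 * ln q)"
proof -
  have l: "ln q \<ge> 1/2" using ln2_half assms by (smt (verit) ln_le_cancel_iff)
  have h: "q * q \<ge> 2 * q" using assms by (intro mult_right_mono) auto
  have "q + 1 \<le> q * q" using h assms by linarith
  then have "q + 1 \<le> q^2" by (simp add: power2_eq_square)
  also have "q^2 = 2 * (q^2 * (1/2))" by simp
  also have "\<dots> \<le> 2 * (q^2 * ln q)" using l by (intro mult_left_mono) auto
  finally show ?thesis .
qed

lemma (in cfl) qq_ge1_real: "real_of_int (qq \<alpha> (Suc k)) \<ge> 1"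
proof -
  have "qq \<alpha> (Suc k) \<ge> 1" using qq_pos[OF irr, of k] by blast
  then show ?thesis by simp
qed

theorem corollary3:
  fixes \<alpha> :: real
  assumes "0 < \<alpha>" and "\<alpha> < 1" and "\<alpha> \<notin> \<rat>"
  shows "((\<exists>B. \<forall>n::nat. n \<ge> 2 \<longrightarrow> \<bar>e_n \<alpha> n / (real n ^ 2 * ln (real n))\<bar> \<le> B)
           \<longleftrightarrow> (\<exists>B. \<forall>s. cf_q \<alpha> s \<ge> 2 \<longrightarrow>
                 \<bar>e_n \<alpha> (nat (cf_q \<alpha> s)) / (real_of_int (cf_q \<alpha> s) ^ 2 * ln (real_of_int (cf_q \<alpha> s)))\<bar> \<le> B))
       \<and> ((\<exists>B. \<forall>s. cf_q \<alpha> s \<ge> 2 \<longrightarrow>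
                 \<bar>e_n \<alpha> (nat (cf_q \<alpha> s)) / (real_of_int (cf_q \<alpha> s) ^ 2 * ln (real_of_int (cf_q \<alpha> s)))\<bar> \<le> B)
           \<longleftrightarrow> (\<exists>B. \<forall>s. cf_q \<alpha> s \<ge> 2 \<longrightarrow>
                 \<bar>ln (real_of_int (cf_q \<alpha> (Suc s))) / (real_of_int (cf_q \<alpha> s) ^ 2 * ln (real_of_int (cf_q \<alpha> s)))\<bar> \<le> B))"
proof -
  interpret cfl \<alpha> using assms by unfold_locales auto
  have AB: "(\<exists>B. \<forall>s. cf_q \<alpha> s \<ge> 2 \<longrightarrow>
                 \<bar>e_n \<alpha> (nat (cf_q \<alpha> s)) / (real_of_int (cf_q \<alpha> s) ^ 2 * ln (real_of_int (cf_q \<alpha> s)))\<bar> \<le> B)"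
    if hyp: "\<exists>B. \<forall>n::nat. n \<ge> 2 \<longrightarrow> \<bar>e_n \<alpha> n / (real n ^ 2 * ln (real n))\<bar> \<le> B"
  proof -
    obtain B where B: "\<forall>n::nat. n \<ge> 2 \<longrightarrow> \<bar>e_n \<alpha> n / (real n ^ 2 * ln (real n))\<bar> \<le> B" using hyp by blast
    show ?thesis
    proof (intro exI allI impI)
      fix s assume s: "cf_q \<alpha> s \<ge> 2"
      have "nat (cf_q \<alpha> s) \<ge> 2" using s by simp
      moreover have "real (nat (cf_q \<alpha> s)) = real_of_int (cf_q \<alpha> s)" using s by simp
      ultimately show "\<bar>e_n \<alpha> (nat (cf_q \<alpha> s)) / (real_of_int (cf_q \<alpha> s) ^ 2 * ln (real_of_int (cf_q \<alpha> s)))\<bar> \<le> B"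
        using B by metis
    qed
  qed
  have BC: "(\<exists>B. \<forall>s. cf_q \<alpha> s \<ge> 2 \<longrightarrow>
                 \<bar>ln (real_of_int (cf_q \<alpha> (Suc s))) / (real_of_int (cf_q \<alpha> s) ^ 2 * ln (real_of_int (cf_q \<alpha> s)))\<bar> \<le> B)"
    if hyp: "\<exists>B. \<forall>s. cf_q \<alpha> s \<ge> 2 \<longrightarrow>
                 \<bar>e_n \<alpha> (nat (cf_q \<alpha> s)) / (real_of_int (cf_q \<alpha> s) ^ 2 * ln (real_of_int (cf_q \<alpha> s)))\<bar> \<le> B"
  proof -
    obtain B where B: "\<forall>s. cf_q \<alpha> s \<ge> 2 \<longrightarrow>
                 \<bar>e_n \<alpha> (nat (cf_q \<alpha> s)) / (real_of_int (cf_q \<alpha> s) ^ 2 * ln (real_of_int (cf_q \<alpha> s)))\<bar> \<le> B"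
      using hyp by blast
    show ?thesis
    proof (intro exI allI impI)
      fix s assume s: "cf_q \<alpha> s \<ge> 2"
      define q where "q = qq \<alpha> (Suc s)"
      define Q where "Q = qq \<alpha> (Suc (Suc s))"
      have cq: "cf_q \<alpha> s = q" "cf_q \<alpha> (Suc s) = Q" unfolding q_def Q_def cf_q_qq by auto
      have s1: "s \<ge> 1" using s by (cases s) auto
      have q2: "of_int q \<ge> (2::real)" using s cq by simp
      have Q1: "of_int Q \<ge> (1::real)" using qq_ge1_real[of "Suc s"] unfolding Q_def .
      define D where "D = (of_int q)^2 * ln (of_int q :: real)"
      have Dp: "D > 0" unfolding D_def using q2 by simp
      have low: "ln (of_int Q) - of_int q - 1 \<le> e_n \<alpha> (nat q)" using e_lower[OF s1] unfolding q_def Q_def .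
      have "\<bar>e_n \<alpha> (nat q) / D\<bar> \<le> B" unfolding D_def using B[rule_format, OF s] unfolding cq .
      then have "e_n \<alpha> (nat q) / D \<le> B" by linarith
      then have eB: "e_n \<alpha> (nat q) \<le> B * D" using Dp by (simp add: divide_le_eq)
      have qD: "of_int q + 1 \<le> 2 * D" unfolding D_def by (rule ln_frac_bound[OF q2])
      have "ln (of_int Q) \<le> (B + 2) * D" using low eB qD by (simp add: algebra_simps)
      then have "ln (of_int Q) / D \<le> B + 2" using Dp by (simp add: divide_le_eq)
      moreover have "ln (of_int Q) / D \<ge> 0" using Q1 Dp by simp
      ultimately show "\<bar>ln (real_of_int (cf_q \<alpha> (Suc s))) / (real_of_int (cf_q \<alpha> s) ^ 2 * ln (real_of_int (cf_q \<alpha> s)))\<bar> \<le> B + 2"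
        unfolding cq D_def[symmetric] by simp
    qed
  qed
  have CA: "\<exists>B. \<forall>n::nat. n \<ge> 2 \<longrightarrow> \<bar>e_n \<alpha> n / (real n ^ 2 * ln (real n))\<bar> \<le> B"
    if hyp: "\<exists>B. \<forall>s. cf_q \<alpha> s \<ge> 2 \<longrightarrow>
                 \<bar>ln (real_of_int (cf_q \<alpha> (Suc s))) / (real_of_int (cf_q \<alpha> s) ^ 2 * ln (real_of_int (cf_q \<alpha> s)))\<bar> \<le> B"
  proof -
    obtain B where B: "\<forall>s. cf_q \<alpha> s \<ge> 2 \<longrightarrow>
                 \<bar>ln (real_of_int (cf_q \<alpha> (Suc s))) / (real_of_int (cf_q \<alpha> s) ^ 2 * ln (real_of_int (cf_q \<alpha> s)))\<bar> \<le> B"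
      using hyp by blast
    define B' where "B' = max B 0"
    define C0 where "C0 = ln (real_of_int (qq \<alpha> 2)) + ln (real_of_int (qq \<alpha> 3))"
    have qq2: "real_of_int (qq \<alpha> 2) \<ge> 1" using qq_ge1_real[of 1] by (simp add: numeral_2_eq_2 del: qq.simps)
    have qq3: "real_of_int (qq \<alpha> 3) \<ge> 1" using qq_ge1_real[of 2] by (simp add: numeral_3_eq_3 del: qq.simps)
    have C0p: "C0 \<ge> 0" unfolding C0_def using qq2 qq3 by simp
    have B'p: "B' \<ge> 0" unfolding B'_def by simp
    show ?thesis
    proof (intro exI allI impI)
      fix n :: nat assume n2: "n \<ge> 2"
      have ex: "\<exists>k. 2 * int n < qq \<alpha> (Suc k)"
      proof -
        obtain s where "2 * int n < qq \<alpha> (Suc (Suc s))" using exists_s by blast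
        then show ?thesis by blast
      qed
      define k where "k = (LEAST k. 2 * int n < qq \<alpha> (Suc k))"
      have k1: "2 * int n < qq \<alpha> (Suc k)" unfolding k_def using ex by (rule LeastI_ex)
      have k0: "k \<noteq> 0"
      proof
        assume "k = 0" then show False using k1 n2 by simp
      qed
      define s where "s = k - 1"
      have ks: "k = Suc s" unfolding s_def using k0 by simp
      have sQ: "2 * int n < qq \<alpha> (Suc (Suc s))" using k1 ks by simp
      have sq: "qq \<alpha> (Suc s) \<le> 2 * int n"
      proof -
        have "s < k" using ks by simp
        then have "\<not> (2 * int n < qq \<alpha> (Suc s))" unfolding k_def by (rule not_less_Least)
        then show ?thesis by simp
      qed
      define q where "q = qq \<alpha> (Suc s)"
      define Q where "Q = qq \<alpha> (Suc (Suc s))"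
      have q1: "q \<ge> 1" using qq_pos[OF irr, of s] unfolding q_def by auto
      have Q1: "of_int Q \<ge> (1::real)" using qq_ge1_real[of "Suc s"] unfolding Q_def .
      have lnQ: "ln (of_int Q) \<le> B' * (of_int q)^2 * ln (of_int q) + C0"
      proof (cases "q \<ge> 2")
        case True
        have cq: "cf_q \<alpha> s = q" "cf_q \<alpha> (Suc s) = Q" unfolding q_def Q_def cf_q_qq by auto
        define D where "D = (of_int q)^2 * ln (of_int q :: real)"
        have Dp: "D > 0" unfolding D_def using True by simp
        have s2: "cf_q \<alpha> s \<ge> 2" using True cq by simp
        have "\<bar>ln (of_int Q) / D\<bar> \<le> B" unfolding D_def using B[rule_format, OF s2] unfolding cq .
        then have "ln (of_int Q) / D \<le> B" by linarith
        then have "ln (of_int Q) \<le> B * D" using Dp by (simp add: divide_le_eq)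
        also have "\<dots> \<le> B' * D" unfolding B'_def using Dp by (intro mult_right_mono) auto
        finally show ?thesis using C0p unfolding D_def by (simp add: mult.assoc)
      next
        case False
        then have qe: "q = 1" using q1 by simp
        have "int s \<le> 1" using qq_pos[OF irr, of s] qe unfolding q_def by simp
        then have "s = 0 \<or> s = 1" by auto
        then have "ln (of_int Q) \<le> C0"
        proof
          assume "s = 0"
          then have "Q = qq \<alpha> 2" unfolding Q_def by (simp add: numeral_2_eq_2)
          then show ?thesis unfolding C0_def using qq3 by simp
        next
          assume "s = 1"
          then have "Q = qq \<alpha> 3" unfolding Q_def by (simp add: numeral_3_eq_3)
          then show ?thesis unfolding C0_def using qq2 by simp
        qed
        then show ?thesis using qe by simp
      qed
      have eu: "e_n \<alpha> n \<le> ((real n+1)^2 + 2) * ln ((real n+1)^2) + (real n+1)^2 * ln 4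
         + 2 * (real n + 1) * ln (2 * of_int q)
         + 2 * ln (2 * of_int Q) * (real (n div nat q) + 1)"
        using e_upper[of n s] n2 sQ unfolding q_def Q_def by simp
      have dq: "real (n div nat q) * of_int q \<le> real n"
      proof -
        have "(n div nat q) * nat q \<le> n" by (rule div_times_less_eq_dividend)
        then have "real (n div nat q) * real (nat q) \<le> real n" by (metis of_nat_le_iff of_nat_mult)
        then show ?thesis using q1 by simp
      qed
      have as: "((real n+1)^2 + 2) * ln ((real n+1)^2) + (real n+1)^2 * ln 4
         + 2 * (real n + 1) * ln (2 * of_int q)
         + 2 * ln (2 * of_int Q) * (real (n div nat q) + 1) \<le> (31 + 8 * C0 + 24 * B') * (real n^2 * ln (real n))"
        by (rule asym) (use n2 q1 sq Q1 dq B'p C0p lnQ in \<open>auto simp: q_def\<close>)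
      have D: "real n^2 * ln (real n) > 0" using n2 by simp
      have e0: "e_n \<alpha> n \<ge> 0" using e_nonneg n2 by simp
      have "e_n \<alpha> n / (real n^2 * ln (real n)) \<le> 31 + 8 * C0 + 24 * B'"
        using eu as D by (simp add: divide_le_eq)
      moreover have "e_n \<alpha> n / (real n^2 * ln (real n)) \<ge> 0" using e0 D by simp
      ultimately show "\<bar>e_n \<alpha> n / (real n ^ 2 * ln (real n))\<bar> \<le> 31 + 8 * C0 + 24 * B'" by simp
    qed
  qed
  show ?thesis using AB BC CA by blast
qed


end
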